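(* Let $\mu\in\Delta(S)$ and let $(\pi^{(t)})$ be the iterates of Algorithm SMISBR with parameter $\tau>0$, and suppose the algorithm does not stop at step $t$. Then for every $i\in I$, $$\max_{\pi_i'\in\Pi_i}V_i(\mu,\pi_i',\pi_{-i}^{(t)})-V_i(\mu,\pi^{(t)})\le\frac{1}{1-\delta}\Big(\Delta_{\bar i_t}^{(t)}(\bar s_t)+2\tau\log\bar A\Big),$$ where $\bar A=\max_i|A_i|$.
   Context: Markov game $\langle I,S,(A_i),(u_i),P,\delta\rangle$ with finite $I,S,A_i$, $\delta\in(0,1)$; stationary policies $\pi_i$ with $\pi_i(s)\in\Delta(A_i)$, sets $\Pi_i$, $\pi_{-i}(s,a_{-i})=\prod_{j\neq i}\pi_j(s,a_j)$. $V_i(\mu,\pi)=\mathbb E[\sum_k\delta^ku_i(s^k,a^k)]$ with $s^0\sim\mu$, $a^k\sim\pi(s^k)$, $s^{k+1}\sim P(\cdot|s^k,a^k)$. $\nu_i(s,\pi_i)=\sum_{a_i}\pi_i(s,a_i)\log\pi_i(s,a_i)$. $\tilde V_i(s,\pi)=\mathbb E[\sum_k\delta^k(u_i(s^k,a^k)-\tau\nu_i(s^k,\pi_i))\mid s^0=s]$. $\tilde Q_i(s,a_i;\pi)=\sum_{a_{-i}}\pi_{-i}(s,a_{-i})\big(u_i(s,a)-\tau\nu_i(s,\pi_i)+\delta\sum_{s'}P(s'|s,a)\tilde V_i(s',\pi)\big)$; $\tilde Q_i^{(t)}(s,p)=\sum_{a_i}p(a_i)\tilde Q_i(s,a_i;\pi^{(t)})$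 for $p\in\Delta(A_i)$. Algorithm SMISBR with $\tau>0$: $\pi_i^{(0)}(s,a_i)=1/|A_i|$. At step $t$: $BR_i^{(t)}(s,a_i)=\exp(\tilde Q_i(s,a_i;\pi^{(t)})/\tau)/\sum_{a'}\exp(\tilde Q_i(s,a';\pi^{(t)})/\tau)$; $\Delta_i^{(t)}(s)=\max_{p\in\Delta(A_i)}(\tilde Q_i^{(t)}(s,p)-\tau\nu_i(s,p))-(\tilde Q_i^{(t)}(s,\pi_i^{(t)}(s))-\tau\nu_i(s,\pi_i^{(t)}))$. If all $\Delta_i^{(t)}(s)\le0$, stop. Else choose $(\bar i_t,\bar s_t)\in\arg\max_{i,s}\Delta_i^{(t)}(s)$, set $\pi_{\bar i_t}^{(t+1)}(\bar s_t)=BR_{\bar i_t}^{(t)}(\bar s_t)$, leave all other components unchanged. *)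

theory Defs
  imports "HOL-Analysis.Analysis"
begin

text \<open>Joint actions are functions  a :: 'i => 'a  with  a i \<in> A i  (i.e. elements of PiE I A).
  trans G s a s' is the transition probability P(s'|s,a).\<close>

record ('i, 's, 'a) mgame =
  players :: "'i set"
  states  :: "'s set"
  acts    :: "'i \<Rightarrow> 'a set"
  rew     :: "'i \<Rightarrow> 's \<Rightarrow> ('i \<Rightarrow> 'a) \<Rightarrow> real"
  trans   :: "'s \<Rightarrow> ('i \<Rightarrow> 'a) \<Rightarrow> 's \<Rightarrow> real"
  disc    :: real

definition joint_acts :: "('i, 's, 'a) mgame \<Rightarrow> ('i \<Rightarrow> 'a) set" where
  "joint_acts G = PiE (players G) (acts G)"

definition prob_simplex :: "'x set \<Rightarrow> ('x \<Rightarrow> real) set" where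
  "prob_simplex X = {p. (\<forall>x\<in>X. 0 \<le> p x) \<and> (\<Sum>x\<in>X. p x) = 1}"

definition markov_game :: "('i, 's, 'a) mgame \<Rightarrow> bool" where
  "markov_game G \<longleftrightarrow>
     finite (players G) \<and> finite (states G) \<and> states G \<noteq> {} \<and>
     (\<forall>i\<in>players G. finite (acts G i) \<and> acts G i \<noteq> {}) \<and>
     0 < disc G \<and> disc G < 1 \<and>
     (\<forall>s\<in>states G. \<forall>a\<in>joint_acts G. trans G s a \<in> prob_simplex (states G))"

text \<open>Stationary policies: pol i s a = pi_i(s, a).  The set Pi_i of stationary policies of player i.\<close>
type_synonym ('i, 's, 'a) profile = "'i \<Rightarrow> 's \<Rightarrow> 'a \<Rightarrow> real"

definition Pol :: "('i, 's, 'a) mgame \<Rightarrow> 'i \<Rightarrow> ('s \<Rightarrow> 'a \<Rightarrow> real) set" where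
  "Pol G i = {p. \<forall>s\<in>states G. p s \<in> prob_simplex (acts G i)}"

definition joint_prob :: "('i, 's, 'a) mgame \<Rightarrow> ('i, 's, 'a) profile \<Rightarrow> 's \<Rightarrow> ('i \<Rightarrow> 'a) \<Rightarrow> real" where
  "joint_prob G pol s a = (\<Prod>i\<in>players G. pol i s (a i))"

text \<open>Distribution of the state s^k when s^0 ~ mu, a^k ~ pi(s^k), s^(k+1) ~ P(.|s^k,a^k).\<close>
primrec state_dist :: "('i, 's, 'a) mgame \<Rightarrow> ('i, 's, 'a) profile \<Rightarrow> ('s \<Rightarrow> real) \<Rightarrow> nat \<Rightarrow> 's \<Rightarrow> real" where
  "state_dist G pol mu 0 = mu"
| "state_dist G pol mu (Suc k) = (\<lambda>s'. \<Sum>s\<in>states G. state_dist G pol mu k s *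
      (\<Sum>a\<in>joint_acts G. joint_prob G pol s a * trans G s a s'))"

definition disc_val :: "('i, 's, 'a) mgame \<Rightarrow> ('i, 's, 'a) profile \<Rightarrow> ('s \<Rightarrow> real) \<Rightarrow>
    ('s \<Rightarrow> ('i \<Rightarrow> 'a) \<Rightarrow> real) \<Rightarrow> real" where
  "disc_val G pol mu r = (\<Sum>k. disc G ^ k * (\<Sum>s\<in>states G. state_dist G pol mu k s *
      (\<Sum>a\<in>joint_acts G. joint_prob G pol s a * r s a)))"

definition V :: "('i, 's, 'a) mgame \<Rightarrow> 'i \<Rightarrow> ('s \<Rightarrow> real) \<Rightarrow> ('i, 's, 'a) profile \<Rightarrow> real" where
  "V G i mu pol = disc_val G pol mu (rew G i)"

text \<open>nu_i(s, p) = sum_a p(a) log p(a)  (with ln 0 = 0, so 0 log 0 = 0)\<close>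
definition negent :: "('i, 's, 'a) mgame \<Rightarrow> 'i \<Rightarrow> ('a \<Rightarrow> real) \<Rightarrow> real" where
  "negent G i p = (\<Sum>a\<in>acts G i. p a * ln (p a))"

definition Vt :: "('i, 's, 'a) mgame \<Rightarrow> real \<Rightarrow> 'i \<Rightarrow> 's \<Rightarrow> ('i, 's, 'a) profile \<Rightarrow> real" where
  "Vt G tau i s pol = disc_val G pol (\<lambda>s'. if s' = s then 1 else 0)
      (\<lambda>s' a. rew G i s' a - tau * negent G i (pol i s'))"

definition Qt :: "('i, 's, 'a) mgame \<Rightarrow> real \<Rightarrow> 'i \<Rightarrow> 's \<Rightarrow> 'a \<Rightarrow> ('i, 's, 'a) profile \<Rightarrow> real" where
  "Qt G tau i s ai pol =
     (\<Sum>b\<in>PiE (players G - {i}) (acts G).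
        (\<Prod>j\<in>players G - {i}. pol j s (b j)) *
        (rew G i s (b(i := ai)) - tau * negent G i (pol i s)
         + disc G * (\<Sum>s'\<in>states G. trans G s (b(i := ai)) s' * Vt G tau i s' pol)))"

definition Qtp :: "('i, 's, 'a) mgame \<Rightarrow> real \<Rightarrow> 'i \<Rightarrow> 's \<Rightarrow> ('a \<Rightarrow> real) \<Rightarrow> ('i, 's, 'a) profile \<Rightarrow> real" where
  "Qtp G tau i s p pol = (\<Sum>ai\<in>acts G i. p ai * Qt G tau i s ai pol)"

definition BR :: "('i, 's, 'a) mgame \<Rightarrow> real \<Rightarrow> ('i, 's, 'a) profile \<Rightarrow> 'i \<Rightarrow> 's \<Rightarrow> 'a \<Rightarrow> real" where
  "BR G tau pol i s ai = exp (Qt G tau i s ai pol / tau) /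
      (\<Sum>a'\<in>acts G i. exp (Qt G tau i s a' pol / tau))"

definition Gap :: "('i, 's, 'a) mgame \<Rightarrow> real \<Rightarrow> ('i, 's, 'a) profile \<Rightarrow> 'i \<Rightarrow> 's \<Rightarrow> real" where
  "Gap G tau pol i s =
     (SUP p\<in>prob_simplex (acts G i). Qtp G tau i s p pol - tau * negent G i p)
     - (Qtp G tau i s (pol i s) pol - tau * negent G i (pol i s))"

definition not_stopped :: "('i, 's, 'a) mgame \<Rightarrow> real \<Rightarrow> ('i, 's, 'a) profile \<Rightarrow> bool" where
  "not_stopped G tau pol \<longleftrightarrow> (\<exists>i\<in>players G. \<exists>s\<in>states G. Gap G tau pol i s > 0)"

definition is_argmax_gap :: "('i, 's, 'a) mgame \<Rightarrow> real \<Rightarrow> ('i, 's, 'a) profile \<Rightarrow> 'i \<Rightarrow> 's \<Rightarrow> bool" where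
  "is_argmax_gap G tau pol ib sb \<longleftrightarrow> ib \<in> players G \<and> sb \<in> states G \<and>
     (\<forall>i\<in>players G. \<forall>s\<in>states G. Gap G tau pol i s \<le> Gap G tau pol ib sb)"

text \<open>Policies are only constrained on their meaningful domain (i in I, s in S, a in A_i).\<close>
definition smisbr_run :: "('i, 's, 'a) mgame \<Rightarrow> real \<Rightarrow> (nat \<Rightarrow> ('i, 's, 'a) profile) \<Rightarrow>
    (nat \<Rightarrow> 'i) \<Rightarrow> (nat \<Rightarrow> 's) \<Rightarrow> nat \<Rightarrow> bool" where
  "smisbr_run G tau pit ib sb t \<longleftrightarrow>
     (\<forall>i\<in>players G. \<forall>s\<in>states G. \<forall>a\<in>acts G i. pit 0 i s a = 1 / real (card (acts G i))) \<and>
     (\<forall>k<t. not_stopped G tau (pit k) \<and> is_argmax_gap G tau (pit k) (ib k) (sb k) \<and>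
        (\<forall>i\<in>players G. \<forall>s\<in>states G. \<forall>a\<in>acts G i.
           pit (Suc k) i s a = (if i = ib k \<and> s = sb k then BR G tau (pit k) i s a else pit k i s a)))"

definition maxA :: "('i, 's, 'a) mgame \<Rightarrow> nat" where
  "maxA G = Max ((\<lambda>i. card (acts G i)) ` players G)"

end

theory Submission imports Defs begin

definition vp :: "('i, 's, 'a) mgame \<Rightarrow> ('i, 's, 'a) profile \<Rightarrow> bool" where
  "vp G \<sigma> \<longleftrightarrow> (\<forall>j\<in>players G. \<forall>s\<in>states G. \<sigma> j s \<in> prob_simplex (acts G j))"

lemma mg_facts:
  assumes "markov_game G"
  shows "finite (players G)" "finite (states G)" "\<And>i. i \<in> players G \<Longrightarrow> finite (acts G i)"
    "\<And>i. i \<in> players G \<Longrightarrow> acts G i \<noteq> {}" "0 < disc G" "disc G < 1"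
    "\<And>s a s'. s \<in> states G \<Longrightarrow> a \<in> joint_acts G \<Longrightarrow> s' \<in> states G \<Longrightarrow> 0 \<le> trans G s a s'"
    "\<And>s a. s \<in> states G \<Longrightarrow> a \<in> joint_acts G \<Longrightarrow> (\<Sum>s'\<in>states G. trans G s a s') = 1"
  using assms unfolding markov_game_def prob_simplex_def by auto

lemma jp_nonneg:
  assumes "vp G \<sigma>" "s \<in> states G" "a \<in> joint_acts G"
  shows "0 \<le> joint_prob G \<sigma> s a"
  using assms unfolding vp_def joint_prob_def joint_acts_def prob_simplex_def
  by (auto intro!: prod_nonneg simp: PiE_iff)

lemma sum_PiE_prod:
  assumes "finite J" "\<And>j. j \<in> J \<Longrightarrow> finite (A j)"
  shows "(\<Sum>b\<in>PiE J A. \<Prod>j\<in>J. (f j (b j)::real)) = (\<Prod>j\<in>J. \<Sum>x\<in>A j. f j x)"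
  using prod_sum_PiE[where f=f and A=J and B=A] assms by simp

lemma jp_sum1:
  assumes "markov_game G" "vp G \<sigma>" "s \<in> states G"
  shows "(\<Sum>a\<in>joint_acts G. joint_prob G \<sigma> s a) = 1"
proof -
  have "(\<Sum>a\<in>joint_acts G. joint_prob G \<sigma> s a) = (\<Prod>j\<in>players G. \<Sum>x\<in>acts G j. \<sigma> j s x)"
    unfolding joint_acts_def joint_prob_def
    by (rule sum_PiE_prod) (use mg_facts[OF assms(1)] in auto)
  also have "\<dots> = 1" using assms(2,3) unfolding vp_def prob_simplex_def by auto
  finally show ?thesis .
qed

lemma sum_others1:
  assumes "markov_game G" "vp G \<sigma>" "s \<in> states G"
  shows "(\<Sum>b\<in>PiE (players G - {i}) (acts G). \<Prod>j\<in>players G - {i}. \<sigma> j s (b j)) = 1"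
proof -
  have "(\<Sum>b\<in>PiE (players G - {i}) (acts G). \<Prod>j\<in>players G - {i}. \<sigma> j s (b j))
     = (\<Prod>j\<in>players G - {i}. \<Sum>x\<in>acts G j. \<sigma> j s x)"
    by (rule sum_PiE_prod) (use mg_facts[OF assms(1)] in auto)
  also have "\<dots> = 1" using assms(2,3) unfolding vp_def prob_simplex_def by auto
  finally show ?thesis .
qed

lemma split_joint:
  assumes "markov_game G" "i \<in> players G"
  shows "(\<Sum>a\<in>joint_acts G. joint_prob G \<sigma> s a * F a) =
    (\<Sum>ai\<in>acts G i. \<sigma> i s ai * (\<Sum>b\<in>PiE (players G - {i}) (acts G).
        (\<Prod>j\<in>players G - {i}. \<sigma> j s (b j)) * F (b(i := ai))))"
proof -
  let ?J = "players G - {i}"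
  have I: "players G = insert i ?J" using assms(2) by auto
  have fin: "finite ?J" "finite (acts G i)" "finite (PiE ?J (acts G))"
    using mg_facts[OF assms(1)] assms(2) by (auto intro!: finite_PiE)
  have "(\<Sum>a\<in>joint_acts G. joint_prob G \<sigma> s a * F a) =
     (\<Sum>a\<in>(\<lambda>(y, g). g(i := y)) ` (acts G i \<times> PiE ?J (acts G)). joint_prob G \<sigma> s a * F a)"
    unfolding joint_acts_def by (subst I, subst PiE_insert_eq) simp
  also have "\<dots> = (\<Sum>(y,g)\<in>acts G i \<times> PiE ?J (acts G). joint_prob G \<sigma> s (g(i:=y)) * F (g(i:=y)))"
    using inj_combinator[of i ?J "acts G"] by (subst sum.reindex) (auto simp: case_prod_unfold)
  also have "\<dots> = (\<Sum>(y,g)\<in>acts G i \<times> PiE ?J (acts G). \<sigma> i s y * ((\<Prod>j\<in>?J. \<sigma> j s (g j)) * F (g(i:=y))))"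
  proof (rule sum.cong[OF refl], clarify)
    fix y g
    have "joint_prob G \<sigma> s (g(i:=y)) = \<sigma> i s y * (\<Prod>j\<in>?J. \<sigma> j s ((g(i:=y)) j))"
      unfolding joint_prob_def by (subst I, subst prod.insert) (use fin in auto)
    also have "(\<Prod>j\<in>?J. \<sigma> j s ((g(i:=y)) j)) = (\<Prod>j\<in>?J. \<sigma> j s (g j))"
      by (rule prod.cong) auto
    finally have "joint_prob G \<sigma> s (g(i:=y)) = \<sigma> i s y * (\<Prod>j\<in>?J. \<sigma> j s (g j))" .
    then show "joint_prob G \<sigma> s (g(i:=y)) * F (g(i:=y)) = \<sigma> i s y * ((\<Prod>j\<in>?J. \<sigma> j s (g j)) * F (g(i:=y)))"
      by simp
  qed
  also have "\<dots> = (\<Sum>y\<in>acts G i. \<Sum>g\<in>PiE ?J (acts G). \<sigma> i s y * ((\<Prod>j\<in>?J. \<sigma> j s (g j)) * F (g(i:=y))))"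
    by (rule sum.cartesian_product[symmetric])
  also have "\<dots> = (\<Sum>ai\<in>acts G i. \<sigma> i s ai * (\<Sum>b\<in>PiE ?J (acts G).
        (\<Prod>j\<in>?J. \<sigma> j s (b j)) * F (b(i := ai))))"
    by (simp add: sum_distrib_left)
  finally show ?thesis .
qed
lemma sd_simplex:
  assumes "markov_game G" "vp G \<sigma>" "mu \<in> prob_simplex (states G)"
  shows "state_dist G \<sigma> mu k \<in> prob_simplex (states G)"
proof (induction k)
  case 0 then show ?case using assms by simp
next
  case (Suc k)
  let ?d = "state_dist G \<sigma> mu k"
  have nn: "\<And>s. s \<in> states G \<Longrightarrow> 0 \<le> ?d s" using Suc unfolding prob_simplex_def by auto
  have s1: "(\<Sum>s\<in>states G. ?d s) = 1" using Suc unfolding prob_simplex_def by auto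
  have "\<forall>x\<in>states G. 0 \<le> state_dist G \<sigma> mu (Suc k) x"
    using nn jp_nonneg[OF assms(2)] mg_facts(7)[OF assms(1)]
    by (auto intro!: sum_nonneg mult_nonneg_nonneg)
  moreover have "(\<Sum>x\<in>states G. state_dist G \<sigma> mu (Suc k) x) = 1"
  proof -
    have "(\<Sum>x\<in>states G. state_dist G \<sigma> mu (Suc k) x)
      = (\<Sum>s\<in>states G. ?d s * (\<Sum>a\<in>joint_acts G. joint_prob G \<sigma> s a * (\<Sum>x\<in>states G. trans G s a x)))"
    proof -
      have "(\<Sum>x\<in>states G. state_dist G \<sigma> mu (Suc k) x)
        = (\<Sum>x\<in>states G. \<Sum>s\<in>states G. ?d s * (\<Sum>a\<in>joint_acts G. joint_prob G \<sigma> s a * trans G s a x))"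
        by simp
      also have "\<dots> = (\<Sum>s\<in>states G. \<Sum>x\<in>states G. ?d s * (\<Sum>a\<in>joint_acts G. joint_prob G \<sigma> s a * trans G s a x))"
        by (rule sum.swap)
      also have "\<dots> = (\<Sum>s\<in>states G. ?d s * (\<Sum>x\<in>states G. \<Sum>a\<in>joint_acts G. joint_prob G \<sigma> s a * trans G s a x))"
        by (simp only: sum_distrib_left)
      also have "\<dots> = (\<Sum>s\<in>states G. ?d s * (\<Sum>a\<in>joint_acts G. \<Sum>x\<in>states G. joint_prob G \<sigma> s a * trans G s a x))"
        by (subst sum.swap) (rule refl)
      also have "\<dots> = (\<Sum>s\<in>states G. ?d s * (\<Sum>a\<in>joint_acts G. joint_prob G \<sigma> s a * (\<Sum>x\<in>states G. trans G s a x)))"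
        by (simp only: sum_distrib_left)
      finally show ?thesis .
    qed
    also have "\<dots> = (\<Sum>s\<in>states G. ?d s)"
      using mg_facts(8)[OF assms(1)] jp_sum1[OF assms(1,2)] by (intro sum.cong) auto
    finally show ?thesis using s1 by simp
  qed
  ultimately show ?case unfolding prob_simplex_def by auto
qed

lemma sd_shift: "state_dist G \<sigma> mu (Suc k) = state_dist G \<sigma> (state_dist G \<sigma> mu (Suc 0)) k"
  by (induction k) simp_all

lemma sd_lin:
  "state_dist G \<sigma> (\<lambda>x. \<Sum>j\<in>T. c j * m j x) k = (\<lambda>x. \<Sum>j\<in>T. c j * state_dist G \<sigma> (m j) k x)"
proof (induction k)
  case 0 then show ?case by simp
next
  case (Suc k)
  show ?case
  proof (rule ext)
    fix x
    let ?K = "\<lambda>s. \<Sum>a\<in>joint_acts G. joint_prob G \<sigma> s a * trans G s a x"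
    have "state_dist G \<sigma> (\<lambda>x. \<Sum>j\<in>T. c j * m j x) (Suc k) x
       = (\<Sum>s\<in>states G. (\<Sum>j\<in>T. c j * state_dist G \<sigma> (m j) k s) * ?K s)"
      by (simp add: Suc)
    also have "\<dots> = (\<Sum>s\<in>states G. \<Sum>j\<in>T. c j * (state_dist G \<sigma> (m j) k s * ?K s))"
      by (simp only: sum_distrib_right mult.assoc)
    also have "\<dots> = (\<Sum>j\<in>T. \<Sum>s\<in>states G. c j * (state_dist G \<sigma> (m j) k s * ?K s))"
      by (rule sum.swap)
    also have "\<dots> = (\<Sum>j\<in>T. c j * state_dist G \<sigma> (m j) (Suc k) x)"
      by (simp only: sum_distrib_left state_dist.simps)
    finally show "state_dist G \<sigma> (\<lambda>x. \<Sum>j\<in>T. c j * m j x) (Suc k) x = (\<Sum>j\<in>T. c j * state_dist G \<sigma> (m j) (Suc k) x)" .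
  qed
qed

lemma sd_cong:
  assumes "\<forall>x\<in>states G. mu x = mu' x" "x \<in> states G"
  shows "state_dist G \<sigma> mu k x = state_dist G \<sigma> mu' k x"
  using assms(2)
proof (induction k arbitrary: x)
  case 0 then show ?case using assms(1) by simp
next
  case (Suc k) then show ?case by simp
qed

lemma dv_cong:
  assumes "\<forall>x\<in>states G. mu x = mu' x"
  shows "disc_val G \<sigma> mu r = disc_val G \<sigma> mu' r"
  unfolding disc_val_def using sd_cong[OF assms] by (intro suminf_cong arg_cong2[where f="(*)"] refl sum.cong) auto

lemma simplex_bound:
  assumes "finite X" "d \<in> prob_simplex X"
  shows "\<bar>\<Sum>s\<in>X. d s * h s\<bar> \<le> (\<Sum>s\<in>X. \<bar>h s\<bar>)"
proof -
  have le1: "d s \<le> 1" if "s \<in> X" for s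
  proof -
    have "d s \<le> (\<Sum>s\<in>X. d s)" using assms that unfolding prob_simplex_def
      by (intro member_le_sum) auto
    then show ?thesis using assms unfolding prob_simplex_def by auto
  qed
  have "\<bar>\<Sum>s\<in>X. d s * h s\<bar> \<le> (\<Sum>s\<in>X. \<bar>d s * h s\<bar>)" by (rule sum_abs)
  also have "\<dots> \<le> (\<Sum>s\<in>X. \<bar>h s\<bar>)"
  proof (rule sum_mono)
    fix s assume "s \<in> X"
    then have "0 \<le> d s" "d s \<le> 1" using le1 assms unfolding prob_simplex_def by auto
    then show "\<bar>d s * h s\<bar> \<le> \<bar>h s\<bar>" by (simp add: abs_mult mult_left_le_one_le)
  qed
  finally show ?thesis .
qed

lemma geo_summable:
  fixes f :: "nat \<Rightarrow> real"
  assumes "\<And>k. \<bar>f k\<bar> \<le> C" "0 \<le> q" "q < 1"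
  shows "summable (\<lambda>k. q ^ k * f k)"
proof (rule summable_comparison_test[where g="\<lambda>k. C * q ^ k"])
  show "\<exists>N. \<forall>n\<ge>N. norm (q ^ n * f n) \<le> C * q ^ n"
    using assms by (auto simp: abs_mult mult.commute intro!: mult_right_mono)
  show "summable (\<lambda>k. C * q ^ k)" using assms by (intro summable_mult summable_geometric) auto
qed

lemma B_Suc:
  "(\<Sum>x\<in>states G. state_dist G \<sigma> mu (Suc k) x * W x) =
   (\<Sum>s\<in>states G. state_dist G \<sigma> mu k s * (\<Sum>a\<in>joint_acts G. joint_prob G \<sigma> s a * (\<Sum>x\<in>states G. trans G s a x * W x)))"
proof -
  let ?d = "state_dist G \<sigma> mu k"
  have "(\<Sum>x\<in>states G. state_dist G \<sigma> mu (Suc k) x * W x)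
    = (\<Sum>x\<in>states G. \<Sum>s\<in>states G. ?d s * (\<Sum>a\<in>joint_acts G. joint_prob G \<sigma> s a * trans G s a x) * W x)"
    by (simp add: sum_distrib_right)
  also have "\<dots> = (\<Sum>s\<in>states G. \<Sum>x\<in>states G. ?d s * (\<Sum>a\<in>joint_acts G. joint_prob G \<sigma> s a * trans G s a x) * W x)"
    by (rule sum.swap)
  also have "\<dots> = (\<Sum>s\<in>states G. ?d s * (\<Sum>x\<in>states G. \<Sum>a\<in>joint_acts G. joint_prob G \<sigma> s a * (trans G s a x * W x)))"
    by (simp only: sum_distrib_left sum_distrib_right mult.assoc)
  also have "\<dots> = (\<Sum>s\<in>states G. ?d s * (\<Sum>a\<in>joint_acts G. \<Sum>x\<in>states G. joint_prob G \<sigma> s a * (trans G s a x * W x)))"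
    by (subst sum.swap) (rule refl)
  also have "\<dots> = (\<Sum>s\<in>states G. ?d s * (\<Sum>a\<in>joint_acts G. joint_prob G \<sigma> s a * (\<Sum>x\<in>states G. trans G s a x * W x)))"
    by (simp only: sum_distrib_left)
  finally show ?thesis .
qed

lemma telescope:
  assumes mg: "markov_game G" and v: "vp G \<sigma>" and mu: "mu \<in> prob_simplex (states G)"
  shows "(\<lambda>k. disc G ^ k * (\<Sum>s\<in>states G. state_dist G \<sigma> mu k s *
      ((\<Sum>a\<in>joint_acts G. joint_prob G \<sigma> s a * (r s a + disc G * (\<Sum>x\<in>states G. trans G s a x * W x))) - W s)))
    sums (disc_val G \<sigma> mu r - (\<Sum>s\<in>states G. mu s * W s))"
proof -
  let ?q = "disc G"
  let ?d = "state_dist G \<sigma> mu"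
  define A where "A k = (\<Sum>s\<in>states G. ?d k s * (\<Sum>a\<in>joint_acts G. joint_prob G \<sigma> s a * r s a))" for k
  define B where "B k = (\<Sum>s\<in>states G. ?d k s * W s)" for k
  have fin: "finite (states G)" and q: "0 \<le> ?q" "?q < 1" using mg_facts[OF mg] by auto
  have bnd: "\<And>k. \<bar>\<Sum>s\<in>states G. ?d k s * h s\<bar> \<le> (\<Sum>s\<in>states G. \<bar>h s\<bar>)" for h
    by (rule simplex_bound[OF fin sd_simplex[OF mg v mu]])
  have sA: "(\<lambda>k. ?q ^ k * A k) sums disc_val G \<sigma> mu r"
  proof -
    have "summable (\<lambda>k. ?q ^ k * A k)" unfolding A_def by (rule geo_summable[OF bnd q])
    then show ?thesis unfolding disc_val_def A_def by (simp add: summable_sums)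
  qed
  have "summable (\<lambda>k. ?q ^ k * B k)" unfolding B_def by (rule geo_summable[OF bnd q])
  then have "(\<lambda>k. ?q ^ k * B k) \<longlonglongrightarrow> 0" by (rule summable_LIMSEQ_zero)
  then have sB: "(\<lambda>k. ?q ^ Suc k * B (Suc k) - ?q ^ k * B k) sums (0 - ?q ^ 0 * B 0)"
    by (rule telescope_sums)
  have "(\<lambda>k. ?q ^ k * A k + (?q ^ Suc k * B (Suc k) - ?q ^ k * B k)) sums
      (disc_val G \<sigma> mu r + (0 - ?q ^ 0 * B 0))"
    by (rule sums_add[OF sA sB])
  moreover have "?q ^ k * A k + (?q ^ Suc k * B (Suc k) - ?q ^ k * B k) =
     ?q ^ k * (\<Sum>s\<in>states G. ?d k s *
      ((\<Sum>a\<in>joint_acts G. joint_prob G \<sigma> s a * (r s a + ?q * (\<Sum>x\<in>states G. trans G s a x * W x))) - W s))" for k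
  proof -
    have BS: "B (Suc k) = (\<Sum>s\<in>states G. ?d k s * (\<Sum>a\<in>joint_acts G. joint_prob G \<sigma> s a * (\<Sum>x\<in>states G. trans G s a x * W x)))"
      unfolding B_def by (rule B_Suc)
    have X: "(\<Sum>s\<in>states G. ?d k s *
      ((\<Sum>a\<in>joint_acts G. joint_prob G \<sigma> s a * (r s a + ?q * (\<Sum>x\<in>states G. trans G s a x * W x))) - W s))
      = A k + ?q * B (Suc k) - B k"
      unfolding BS A_def B_def[of k]
      by (simp add: algebra_simps sum.distrib sum_subtractf sum_distrib_left)
    show ?thesis unfolding X by (simp add: algebra_simps)
  qed
  ultimately show ?thesis unfolding B_def by simp
qed

lemma dv_summable:
  assumes mg: "markov_game G" and v: "vp G \<sigma>" and mu: "mu \<in> prob_simplex (states G)"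
  shows "summable (\<lambda>k. disc G ^ k * (\<Sum>s\<in>states G. state_dist G \<sigma> mu k s * h s))"
  by (rule geo_summable[OF simplex_bound[OF mg_facts(2)[OF mg] sd_simplex[OF mg v mu]]])
     (use mg_facts[OF mg] in auto)

lemma dv_split:
  assumes mg: "markov_game G" and v: "vp G \<sigma>" and mu: "mu \<in> prob_simplex (states G)"
  shows "disc_val G \<sigma> mu r = (\<Sum>s\<in>states G. mu s * (\<Sum>a\<in>joint_acts G. joint_prob G \<sigma> s a * r s a))
     + disc G * disc_val G \<sigma> (state_dist G \<sigma> mu (Suc 0)) r"
proof -
  let ?R = "\<lambda>s. \<Sum>a\<in>joint_acts G. joint_prob G \<sigma> s a * r s a"
  define f where "f k = disc G ^ k * (\<Sum>s\<in>states G. state_dist G \<sigma> mu k s * ?R s)" for k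
  define g where "g k = disc G ^ k * (\<Sum>s\<in>states G. state_dist G \<sigma> (state_dist G \<sigma> mu (Suc 0)) k s * ?R s)" for k
  have sf: "summable f" unfolding f_def by (rule dv_summable[OF mg v mu])
  have d1: "state_dist G \<sigma> mu (Suc 0) \<in> prob_simplex (states G)" by (rule sd_simplex[OF mg v mu])
  have sg: "summable g" unfolding g_def by (rule dv_summable[OF mg v d1])
  have fs: "f (Suc k) = disc G * g k" for k unfolding f_def g_def by (subst sd_shift) simp
  have "(\<Sum>k. f (Suc k)) = suminf f - f 0" by (rule suminf_split_head[OF sf])
  moreover have "(\<Sum>k. f (Suc k)) = disc G * suminf g" unfolding fs by (rule suminf_mult[OF sg])
  ultimately have "suminf f = f 0 + disc G * suminf g" by simp
  then show ?thesis unfolding disc_val_def f_def g_def by simp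
qed

lemma dv_lin:
  assumes mg: "markov_game G" and v: "vp G \<sigma>" and m: "\<And>j. j \<in> T \<Longrightarrow> m j \<in> prob_simplex (states G)"
    and T: "finite T"
  shows "disc_val G \<sigma> (\<lambda>x. \<Sum>j\<in>T. c j * m j x) r = (\<Sum>j\<in>T. c j * disc_val G \<sigma> (m j) r)"
proof -
  let ?R = "\<lambda>s. \<Sum>a\<in>joint_acts G. joint_prob G \<sigma> s a * r s a"
  define f where "f j k = disc G ^ k * (\<Sum>s\<in>states G. state_dist G \<sigma> (m j) k s * ?R s)" for j k
  have sf: "summable (f j)" if "j \<in> T" for j unfolding f_def by (rule dv_summable[OF mg v m[OF that]])
  have eq: "disc G ^ k * (\<Sum>s\<in>states G. state_dist G \<sigma> (\<lambda>x. \<Sum>j\<in>T. c j * m j x) k s * ?R s)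
      = (\<Sum>j\<in>T. c j * f j k)" for k
  proof -
    have "(\<Sum>s\<in>states G. state_dist G \<sigma> (\<lambda>x. \<Sum>j\<in>T. c j * m j x) k s * ?R s)
       = (\<Sum>s\<in>states G. \<Sum>j\<in>T. c j * (state_dist G \<sigma> (m j) k s * ?R s))"
      by (simp only: sd_lin sum_distrib_right mult.assoc)
    also have "\<dots> = (\<Sum>j\<in>T. c j * (\<Sum>s\<in>states G. state_dist G \<sigma> (m j) k s * ?R s))"
      by (subst sum.swap) (simp only: sum_distrib_left)
    finally show ?thesis unfolding f_def by (simp add: sum_distrib_left algebra_simps)
  qed
  have "disc_val G \<sigma> (\<lambda>x. \<Sum>j\<in>T. c j * m j x) r = (\<Sum>k. \<Sum>j\<in>T. c j * f j k)"
    unfolding disc_val_def eq ..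
  also have "\<dots> = (\<Sum>j\<in>T. \<Sum>k. c j * f j k)"
    by (rule suminf_sum) (use sf in \<open>auto intro: summable_mult\<close>)
  also have "\<dots> = (\<Sum>j\<in>T. c j * disc_val G \<sigma> (m j) r)"
  proof (rule sum.cong[OF refl])
    fix j assume j: "j \<in> T"
    show "(\<Sum>k. c j * f j k) = c j * disc_val G \<sigma> (m j) r"
      using suminf_mult[OF sf[OF j], of "c j"] unfolding f_def disc_val_def by simp
  qed
  finally show ?thesis .
qed

lemma sum_delta_mult:
  fixes f :: "'x \<Rightarrow> real"
  assumes "finite A" "s \<in> A"
  shows "(\<Sum>x\<in>A. (if x = s then 1 else 0) * f x) = f s"
    "(\<Sum>x\<in>A. f x * (if s = x then 1 else 0)) = f s"
proof -
  have "(\<Sum>x\<in>A. (if x = s then 1 else 0) * f x) = (\<Sum>x\<in>A. if x = s then f x else 0)"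
    by (rule sum.cong) auto
  then show "(\<Sum>x\<in>A. (if x = s then 1 else 0) * f x) = f s" using assms by (simp add: sum.delta')
  have "(\<Sum>x\<in>A. f x * (if s = x then 1 else 0)) = (\<Sum>x\<in>A. if s = x then f x else 0)"
    by (rule sum.cong) auto
  then show "(\<Sum>x\<in>A. f x * (if s = x then 1 else 0)) = f s" using assms by (simp add: sum.delta)
qed

lemma bellman:
  assumes mg: "markov_game G" and v: "vp G \<sigma>" and s: "s \<in> states G"
  shows "disc_val G \<sigma> (\<lambda>s'. if s' = s then 1 else 0) r =
    (\<Sum>a\<in>joint_acts G. joint_prob G \<sigma> s a * (r s a + disc G *
       (\<Sum>x\<in>states G. trans G s a x * disc_val G \<sigma> (\<lambda>s'. if s' = x then 1 else 0) r)))"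
proof -
  let ?e = "\<lambda>x. (\<lambda>s'::'b. if s' = x then (1::real) else 0)"
  let ?M = "\<lambda>j. \<Sum>a\<in>joint_acts G. joint_prob G \<sigma> s a * trans G s a j"
  let ?M' = "\<lambda>y j. \<Sum>a\<in>joint_acts G. joint_prob G \<sigma> y a * trans G y a j"
  have fin: "finite (states G)" using mg_facts[OF mg] by auto
  have es: "?e x \<in> prob_simplex (states G)" if "x \<in> states G" for x
    using that fin unfolding prob_simplex_def by (auto simp: sum.delta)
  have "disc_val G \<sigma> (?e s) r = (\<Sum>x\<in>states G. ?e s x * (\<Sum>a\<in>joint_acts G. joint_prob G \<sigma> x a * r x a))
     + disc G * disc_val G \<sigma> (state_dist G \<sigma> (?e s) (Suc 0)) r"
    by (rule dv_split[OF mg v es[OF s]])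
  also have "(\<Sum>x\<in>states G. ?e s x * (\<Sum>a\<in>joint_acts G. joint_prob G \<sigma> x a * r x a))
     = (\<Sum>a\<in>joint_acts G. joint_prob G \<sigma> s a * r s a)"
    by (rule sum_delta_mult(1)[OF fin s])
  also have "disc_val G \<sigma> (state_dist G \<sigma> (?e s) (Suc 0)) r = disc_val G \<sigma> (\<lambda>x. \<Sum>j\<in>states G. ?M j * ?e j x) r"
  proof (rule dv_cong, rule ballI)
    fix x assume x: "x \<in> states G"
    have "state_dist G \<sigma> (?e s) (Suc 0) x = (\<Sum>y\<in>states G. (if y = s then 1 else 0) * ?M' y x)"
      by simp
    also have "\<dots> = ?M x" by (rule sum_delta_mult(1)[OF fin s])
    also have "\<dots> = (\<Sum>j\<in>states G. ?M j * ?e j x)" using sum_delta_mult(2)[OF fin x, of ?M] by simp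
    finally show "state_dist G \<sigma> (?e s) (Suc 0) x = (\<Sum>j\<in>states G. ?M j * ?e j x)" .
  qed
  also have "\<dots> = (\<Sum>j\<in>states G. ?M j * disc_val G \<sigma> (?e j) r)"
    by (rule dv_lin[OF mg v es fin])
  also have "(\<Sum>j\<in>states G. ?M j * disc_val G \<sigma> (?e j) r) =
      (\<Sum>a\<in>joint_acts G. joint_prob G \<sigma> s a * (\<Sum>x\<in>states G. trans G s a x * disc_val G \<sigma> (?e x) r))"
    by (simp only: sum_distrib_right sum_distrib_left mult.assoc) (rule sum.swap)
  finally show ?thesis by (simp add: algebra_simps sum.distrib sum_distrib_left)
qed

lemma negent_le0:
  assumes "finite (acts G i)" "q \<in> prob_simplex (acts G i)"
  shows "negent G i q \<le> 0"
proof -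
  have "q a * ln (q a) \<le> 0" if a: "a \<in> acts G i" for a
  proof -
    have q0: "0 \<le> q a" using assms a unfolding prob_simplex_def by auto
    have "q a \<le> (\<Sum>a\<in>acts G i. q a)" using assms a unfolding prob_simplex_def
      by (intro member_le_sum) auto
    then have q1: "q a \<le> 1" using assms unfolding prob_simplex_def by auto
    show ?thesis
    proof (cases "q a = 0")
      case False
      then have "ln (q a) \<le> 0" using q0 q1 by simp
      then show ?thesis using q0 by (simp add: mult_nonneg_nonpos)
    qed simp
  qed
  then show ?thesis unfolding negent_def by (intro sum_nonpos) auto
qed

lemma negent_ge:
  assumes "finite (acts G i)" "acts G i \<noteq> {}" "q \<in> prob_simplex (acts G i)"
  shows "- ln (real (card (acts G i))) \<le> negent G i q"
proof -
  let ?n = "real (card (acts G i))"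
  have n: "?n > 0" using assms by (simp add: card_gt_0_iff)
  have key: "- (q a * ln (q a)) \<le> 1 / ?n - q a + q a * ln ?n" if a: "a \<in> acts G i" for a
  proof -
    have q0: "0 \<le> q a" using assms a unfolding prob_simplex_def by auto
    show ?thesis
    proof (cases "q a = 0")
      case True then show ?thesis using n by simp
    next
      case False
      then have qp: "q a > 0" using q0 by simp
      have "ln (1 / (?n * q a)) \<le> 1 / (?n * q a) - 1" using n qp by (intro ln_le_minus_one) simp
      moreover have "ln (1 / (?n * q a)) = - ln ?n - ln (q a)" using n qp by (simp add: ln_div ln_mult)
      ultimately have "- ln (q a) \<le> 1 / (?n * q a) - 1 + ln ?n" by simp
      then have "q a * (- ln (q a)) \<le> q a * (1 / (?n * q a) - 1 + ln ?n)"
        using q0 by (intro mult_left_mono)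
      then show ?thesis using qp by (simp add: algebra_simps)
    qed
  qed
  have "- negent G i q = (\<Sum>a\<in>acts G i. - (q a * ln (q a)))" unfolding negent_def by (simp add: sum_negf)
  also have "\<dots> \<le> (\<Sum>a\<in>acts G i. 1 / ?n - q a + q a * ln ?n)" by (rule sum_mono) (rule key)
  also have "\<dots> = (\<Sum>a\<in>acts G i. 1 / ?n) - (\<Sum>a\<in>acts G i. q a) + (\<Sum>a\<in>acts G i. q a) * ln ?n"
    by (simp only: sum.distrib sum_subtractf sum_distrib_right)
  also have "\<dots> = ln ?n" using n assms unfolding prob_simplex_def by simp
  finally show ?thesis by simp
qed

lemma simplex_cong:
  assumes "\<forall>x\<in>X. p x = q x" "q \<in> prob_simplex X"
  shows "p \<in> prob_simplex X"
  using assms unfolding prob_simplex_def by auto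

lemma BR_simplex:
  assumes "finite (acts G i)" "acts G i \<noteq> {}"
  shows "BR G tau pol i s \<in> prob_simplex (acts G i)"
proof -
  let ?Z = "\<Sum>a'\<in>acts G i. exp (Qt G tau i s a' pol / tau)"
  have Z: "?Z > 0" using assms by (intro sum_pos) auto
  have "(\<Sum>a\<in>acts G i. BR G tau pol i s a) = ?Z / ?Z"
    unfolding BR_def by (rule sum_divide_distrib[symmetric])
  then show ?thesis using Z unfolding prob_simplex_def BR_def by auto
qed

lemma run_vp:
  assumes mg: "markov_game G" and run: "smisbr_run G tau pit ib sb t"
  shows "k \<le> t \<Longrightarrow> vp G (pit k)"
proof (induction k)
  case 0
  show ?case unfolding vp_def
  proof (intro ballI)
    fix j s assume j: "j \<in> players G" and s: "s \<in> states G"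
    have "card (acts G j) > 0" using mg_facts[OF mg] j by (simp add: card_gt_0_iff)
    then have "(\<lambda>a. 1 / real (card (acts G j))) \<in> prob_simplex (acts G j)"
      unfolding prob_simplex_def by simp
    then show "pit 0 j s \<in> prob_simplex (acts G j)"
      by (rule simplex_cong[rotated]) (use run j s in \<open>auto simp: smisbr_run_def\<close>)
  qed
next
  case (Suc k)
  then have k: "k < t" and v: "vp G (pit k)" by auto
  show ?case unfolding vp_def
  proof (intro ballI)
    fix j s assume j: "j \<in> players G" and s: "s \<in> states G"
    have eq: "\<forall>a\<in>acts G j. pit (Suc k) j s a =
        (if j = ib k \<and> s = sb k then BR G tau (pit k) j s a else pit k j s a)"
      using run k j s unfolding smisbr_run_def by auto
    show "pit (Suc k) j s \<in> prob_simplex (acts G j)"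
    proof (cases "j = ib k \<and> s = sb k")
      case True
      then have "\<forall>a\<in>acts G j. pit (Suc k) j s a = BR G tau (pit k) j s a" using eq by simp
      moreover have "BR G tau (pit k) j s \<in> prob_simplex (acts G j)"
        by (rule BR_simplex[OF mg_facts(3,4)[OF mg j]])
      ultimately show ?thesis by (rule simplex_cong)
    next
      case False
      then have "\<forall>a\<in>acts G j. pit (Suc k) j s a = pit k j s a" using eq by (simp only: if_False)
      moreover have "pit k j s \<in> prob_simplex (acts G j)" using v j s unfolding vp_def by blast
      ultimately show ?thesis by (rule simplex_cong)
    qed
  qed
qed

lemma sums_bound_le:
  assumes mg: "markov_game G" and v: "vp G \<sigma>" and mu: "mu \<in> prob_simplex (states G)"
    and sm: "(\<lambda>k. disc G ^ k * (\<Sum>s\<in>states G. state_dist G \<sigma> mu k s * h s)) sums L"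
    and h: "\<And>s. s \<in> states G \<Longrightarrow> h s \<le> c"
  shows "L \<le> c / (1 - disc G)"
proof -
  have q: "0 \<le> disc G" "disc G < 1" using mg_facts[OF mg] by auto
  have gs: "(\<lambda>k. disc G ^ k * c) sums (c / (1 - disc G))"
    using sums_mult2[OF geometric_sums[of "disc G"], of c] q by (simp add: field_simps)
  have "disc G ^ k * (\<Sum>s\<in>states G. state_dist G \<sigma> mu k s * h s) \<le> disc G ^ k * c" for k
  proof -
    have d: "state_dist G \<sigma> mu k \<in> prob_simplex (states G)" by (rule sd_simplex[OF mg v mu])
    have "(\<Sum>s\<in>states G. state_dist G \<sigma> mu k s * h s) \<le> (\<Sum>s\<in>states G. state_dist G \<sigma> mu k s * c)"
      using d h unfolding prob_simplex_def by (intro sum_mono mult_left_mono) auto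
    also have "\<dots> = (\<Sum>s\<in>states G. state_dist G \<sigma> mu k s) * c" by (rule sum_distrib_right[symmetric])
    also have "\<dots> = c" using d unfolding prob_simplex_def by simp
    finally show ?thesis using q by (intro mult_left_mono) auto
  qed
  then show ?thesis by (rule sums_le[OF _ sm gs])
qed

lemma sums_bound_ge:
  assumes mg: "markov_game G" and v: "vp G \<sigma>" and mu: "mu \<in> prob_simplex (states G)"
    and sm: "(\<lambda>k. disc G ^ k * (\<Sum>s\<in>states G. state_dist G \<sigma> mu k s * h s)) sums L"
    and h: "\<And>s. s \<in> states G \<Longrightarrow> c \<le> h s"
  shows "c / (1 - disc G) \<le> L"
proof -
  have "(\<lambda>k. disc G ^ k * (\<Sum>s\<in>states G. state_dist G \<sigma> mu k s * (- h s))) sums (- L)"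
    using sums_minus[OF sm] by (simp add: sum_negf)
  then have "- L \<le> (- c) / (1 - disc G)" by (rule sums_bound_le[OF mg v mu]) (use h in auto)
  then show ?thesis by simp
qed

lemma Qt_formula:
  assumes mg: "markov_game G" and v: "vp G \<sigma>" and s: "s \<in> states G"
  shows "Qt G tau i s ai \<sigma> = (\<Sum>b\<in>PiE (players G - {i}) (acts G).
        (\<Prod>j\<in>players G - {i}. \<sigma> j s (b j)) *
        (rew G i s (b(i := ai)) + disc G * (\<Sum>s'\<in>states G. trans G s (b(i := ai)) s' * Vt G tau i s' \<sigma>)))
     - tau * negent G i (\<sigma> i s)"
proof -
  let ?B = "PiE (players G - {i}) (acts G)"
  let ?P = "\<lambda>b. \<Prod>j\<in>players G - {i}. \<sigma> j s (b j)"
  let ?F = "\<lambda>b. rew G i s (b(i := ai)) + disc G * (\<Sum>s'\<in>states G. trans G s (b(i := ai)) s' * Vt G tau i s' \<sigma>)"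
  let ?c = "tau * negent G i (\<sigma> i s)"
  have "Qt G tau i s ai \<sigma> = (\<Sum>b\<in>?B. ?P b * ?F b - ?P b * ?c)"
    unfolding Qt_def by (intro sum.cong refl) (simp add: algebra_simps)
  also have "\<dots> = (\<Sum>b\<in>?B. ?P b * ?F b) - (\<Sum>b\<in>?B. ?P b) * ?c"
    by (simp only: sum_subtractf sum_distrib_right)
  also have "(\<Sum>b\<in>?B. ?P b) = 1" by (rule sum_others1[OF mg v s])
  finally show ?thesis by (simp only: mult_1_left)
qed

lemma Qtp_formula:
  assumes mg: "markov_game G" and v: "vp G \<sigma>" and s: "s \<in> states G"
    and q: "q \<in> prob_simplex (acts G i)"
  shows "Qtp G tau i s q \<sigma> = (\<Sum>ai\<in>acts G i. q ai * (\<Sum>b\<in>PiE (players G - {i}) (acts G).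
        (\<Prod>j\<in>players G - {i}. \<sigma> j s (b j)) *
        (rew G i s (b(i := ai)) + disc G * (\<Sum>s'\<in>states G. trans G s (b(i := ai)) s' * Vt G tau i s' \<sigma>))))
     - tau * negent G i (\<sigma> i s)"
proof -
  let ?X = "\<lambda>ai. (\<Sum>b\<in>PiE (players G - {i}) (acts G).
        (\<Prod>j\<in>players G - {i}. \<sigma> j s (b j)) *
        (rew G i s (b(i := ai)) + disc G * (\<Sum>s'\<in>states G. trans G s (b(i := ai)) s' * Vt G tau i s' \<sigma>)))"
  let ?c = "tau * negent G i (\<sigma> i s)"
  have "Qtp G tau i s q \<sigma> = (\<Sum>ai\<in>acts G i. q ai * ?X ai - q ai * ?c)"
    unfolding Qtp_def Qt_formula[OF mg v s] by (simp add: algebra_simps)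
  also have "\<dots> = (\<Sum>ai\<in>acts G i. q ai * ?X ai) - (\<Sum>ai\<in>acts G i. q ai) * ?c"
    by (simp only: sum_subtractf sum_distrib_right)
  also have "(\<Sum>ai\<in>acts G i. q ai) = 1" using q unfolding prob_simplex_def by simp
  finally show ?thesis by (simp only: mult_1_left)
qed

lemma Vt_bellman:
  assumes mg: "markov_game G" and v: "vp G \<sigma>" and s: "s \<in> states G"
  shows "Vt G tau i s \<sigma> = (\<Sum>a\<in>joint_acts G. joint_prob G \<sigma> s a *
      (rew G i s a + disc G * (\<Sum>x\<in>states G. trans G s a x * Vt G tau i x \<sigma>))) - tau * negent G i (\<sigma> i s)"
proof -
  let ?r = "\<lambda>s' a. rew G i s' a - tau * negent G i (\<sigma> i s')"
  let ?F = "\<lambda>a. rew G i s a + disc G * (\<Sum>x\<in>states G. trans G s a x * Vt G tau i x \<sigma>)"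
  let ?c = "tau * negent G i (\<sigma> i s)"
  have "Vt G tau i s \<sigma> = (\<Sum>a\<in>joint_acts G. joint_prob G \<sigma> s a * (?r s a + disc G *
       (\<Sum>x\<in>states G. trans G s a x * disc_val G \<sigma> (\<lambda>s'. if s' = x then 1 else 0) ?r)))"
    unfolding Vt_def by (rule bellman[OF mg v s])
  also have "\<dots> = (\<Sum>a\<in>joint_acts G. joint_prob G \<sigma> s a * ?F a - joint_prob G \<sigma> s a * ?c)"
    unfolding Vt_def by (intro sum.cong refl) (simp add: algebra_simps)
  also have "\<dots> = (\<Sum>a\<in>joint_acts G. joint_prob G \<sigma> s a * ?F a) - (\<Sum>a\<in>joint_acts G. joint_prob G \<sigma> s a) * ?c"
    by (simp only: sum_subtractf sum_distrib_right)
  also have "(\<Sum>a\<in>joint_acts G. joint_prob G \<sigma> s a) = 1" by (rule jp_sum1[OF mg v s])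
  finally show ?thesis by (simp only: mult_1_left)
qed

lemma gap_lb:
  assumes mg: "markov_game G" and tau: "tau > 0" and v: "vp G \<sigma>" and s: "s \<in> states G"
    and i: "i \<in> players G" and q: "q \<in> prob_simplex (acts G i)"
  shows "(Qtp G tau i s q \<sigma> - tau * negent G i q) - (Qtp G tau i s (\<sigma> i s) \<sigma> - tau * negent G i (\<sigma> i s))
     \<le> Gap G tau \<sigma> i s"
proof -
  have fin: "finite (acts G i)" "acts G i \<noteq> {}" using mg_facts[OF mg] i by auto
  have "bdd_above ((\<lambda>p. Qtp G tau i s p \<sigma> - tau * negent G i p) ` prob_simplex (acts G i))"
  proof (rule bdd_aboveI2)
    fix p assume p: "p \<in> prob_simplex (acts G i)"
    have "Qtp G tau i s p \<sigma> \<le> (\<Sum>a\<in>acts G i. \<bar>Qt G tau i s a \<sigma>\<bar>)"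
      using simplex_bound[OF fin(1) p, of "\<lambda>a. Qt G tau i s a \<sigma>"] unfolding Qtp_def by simp
    moreover have "- ln (real (card (acts G i))) \<le> negent G i p" by (rule negent_ge[OF fin p])
    then have "tau * (- ln (real (card (acts G i)))) \<le> tau * negent G i p"
      using tau by (intro mult_left_mono) auto
    then have "- (tau * negent G i p) \<le> tau * ln (real (card (acts G i)))" by simp
    ultimately show "Qtp G tau i s p \<sigma> - tau * negent G i p \<le>
      (\<Sum>a\<in>acts G i. \<bar>Qt G tau i s a \<sigma>\<bar>) + tau * ln (real (card (acts G i)))" by simp
  qed
  then have "Qtp G tau i s q \<sigma> - tau * negent G i q \<le>
     (SUP p\<in>prob_simplex (acts G i). Qtp G tau i s p \<sigma> - tau * negent G i p)"
    by (rule cSUP_upper[OF q])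
  then show ?thesis unfolding Gap_def by simp
qed

theorem mainTheorem13:
  fixes G :: "('i, 's, 'a) mgame" and tau :: real and mu :: "'s \<Rightarrow> real"
    and pit :: "nat \<Rightarrow> ('i, 's, 'a) profile" and ib :: "nat \<Rightarrow> 'i" and sb :: "nat \<Rightarrow> 's"
    and t :: nat
  assumes "markov_game G"
    and "tau > 0"
    and "mu \<in> prob_simplex (states G)"
    and "smisbr_run G tau pit ib sb t"
    and "not_stopped G tau (pit t)"
    and "is_argmax_gap G tau (pit t) (ib t) (sb t)"
  shows "\<forall>i\<in>players G.
     (SUP p\<in>Pol G i. V G i mu ((pit t)(i := p))) - V G i mu (pit t)
       \<le> 1 / (1 - disc G) * (Gap G tau (pit t) (ib t) (sb t) + 2 * tau * ln (real (maxA G)))"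
proof (intro ballI)
  fix i assume i: "i \<in> players G"
  note mg = assms(1)
  note tau = assms(2)
  note mu = assms(3)
  define \<sigma> where "\<sigma> = pit t"
  have v: "vp G \<sigma>" unfolding \<sigma>_def by (rule run_vp[OF mg assms(4)]) simp
  let ?W = "\<lambda>x. Vt G tau i x \<sigma>"
  let ?F = "\<lambda>s a. rew G i s a + disc G * (\<Sum>x\<in>states G. trans G s a x * ?W x)"
  let ?X = "\<lambda>s ai. \<Sum>b\<in>PiE (players G - {i}) (acts G). (\<Prod>j\<in>players G - {i}. \<sigma> j s (b j)) * ?F s (b(i := ai))"
  define D where "D = Gap G tau \<sigma> (ib t) (sb t)"
  define Ab where "Ab = ln (real (maxA G))"
  have q: "0 < disc G" "disc G < 1" using mg_facts[OF mg] by auto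
  have fin_i: "finite (acts G i)" "acts G i \<noteq> {}" using mg_facts[OF mg] i by auto
  have cpos: "0 < card (acts G i)" using fin_i by (simp add: card_gt_0_iff)
  have cardle: "card (acts G i) \<le> maxA G"
    unfolding maxA_def using mg_facts(1)[OF mg] i by (intro Max_ge) auto
  have lnle: "ln (real (card (acts G i))) \<le> Ab"
    unfolding Ab_def using cpos cardle by (subst ln_le_cancel_iff) auto
  have "0 \<le> ln (real (card (acts G i)))" using cpos by simp
  then have Ab0: "0 \<le> Ab" using lnle by linarith
  have Dge: "Gap G tau \<sigma> i s \<le> D" if "s \<in> states G" for s
    using assms(6) i that unfolding D_def \<sigma>_def is_argmax_gap_def by blast
  have Wbell: "?W s = (\<Sum>ai\<in>acts G i. \<sigma> i s ai * ?X s ai) - tau * negent G i (\<sigma> i s)"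
    if s: "s \<in> states G" for s
    using Vt_bellman[OF mg v s, of tau i] split_joint[OF mg i, of \<sigma> s "?F s"] by linarith
  have Wbell2: "(\<Sum>a\<in>joint_acts G. joint_prob G \<sigma> s a * ?F s a) - ?W s = tau * negent G i (\<sigma> i s)"
    if s: "s \<in> states G" for s
    using Vt_bellman[OF mg v s, of tau i] by linarith
  have T2: "(\<lambda>k. disc G ^ k * (\<Sum>s\<in>states G. state_dist G \<sigma> mu k s *
      ((\<Sum>a\<in>joint_acts G. joint_prob G \<sigma> s a * ?F s a) - ?W s)))
    sums (V G i mu \<sigma> - (\<Sum>s\<in>states G. mu s * ?W s))"
    unfolding V_def by (rule telescope[OF mg v mu])
  have low: "(- (tau * Ab)) / (1 - disc G) \<le> V G i mu \<sigma> - (\<Sum>s\<in>states G. mu s * ?W s)"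
  proof (rule sums_bound_ge[OF mg v mu T2])
    fix s assume s: "s \<in> states G"
    have "- ln (real (card (acts G i))) \<le> negent G i (\<sigma> i s)"
      using negent_ge[OF fin_i] v i s unfolding vp_def by blast
    then have "- Ab \<le> negent G i (\<sigma> i s)" using lnle by linarith
    then have "tau * (- Ab) \<le> tau * negent G i (\<sigma> i s)" using tau by (intro mult_left_mono) auto
    then show "- (tau * Ab) \<le> (\<Sum>a\<in>joint_acts G. joint_prob G \<sigma> s a * ?F s a) - ?W s"
      using Wbell2[OF s] by simp
  qed
  have up: "V G i mu (\<sigma>(i := p)) - V G i mu \<sigma> \<le> 1 / (1 - disc G) * (D + 2 * tau * Ab)"
    if p: "p \<in> Pol G i" for p
  proof -
    let ?s' = "\<sigma>(i := p)"
    have v': "vp G ?s'" using v p unfolding vp_def Pol_def by auto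
    have T1: "(\<lambda>k. disc G ^ k * (\<Sum>s\<in>states G. state_dist G ?s' mu k s *
      ((\<Sum>a\<in>joint_acts G. joint_prob G ?s' s a * ?F s a) - ?W s)))
      sums (V G i mu ?s' - (\<Sum>s\<in>states G. mu s * ?W s))"
      unfolding V_def by (rule telescope[OF mg v' mu])
    have hi: "V G i mu ?s' - (\<Sum>s\<in>states G. mu s * ?W s) \<le> D / (1 - disc G)"
    proof (rule sums_bound_le[OF mg v' mu T1])
      fix s assume s: "s \<in> states G"
      have ps: "p s \<in> prob_simplex (acts G i)" using p s unfolding Pol_def by auto
      have si: "\<sigma> i s \<in> prob_simplex (acts G i)" using v i s unfolding vp_def by auto
      have pc: "(\<Prod>j\<in>players G - {i}. ?s' j s (b j)) = (\<Prod>j\<in>players G - {i}. \<sigma> j s (b j))" for b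
        by (rule prod.cong) auto
      have E': "(\<Sum>a\<in>joint_acts G. joint_prob G ?s' s a * ?F s a) = (\<Sum>ai\<in>acts G i. p s ai * ?X s ai)"
        using split_joint[OF mg i, of ?s' s "?F s"] by (simp only: pc fun_upd_same)
      have g: "(Qtp G tau i s (p s) \<sigma> - tau * negent G i (p s)) - (Qtp G tau i s (\<sigma> i s) \<sigma> - tau * negent G i (\<sigma> i s))
         \<le> Gap G tau \<sigma> i s" by (rule gap_lb[OF mg tau v s i ps])
      have Q1: "Qtp G tau i s (p s) \<sigma> = (\<Sum>ai\<in>acts G i. p s ai * ?X s ai) - tau * negent G i (\<sigma> i s)"
        by (rule Qtp_formula[OF mg v s ps])
      have Q2: "Qtp G tau i s (\<sigma> i s) \<sigma> = (\<Sum>ai\<in>acts G i. \<sigma> i s ai * ?X s ai) - tau * negent G i (\<sigma> i s)"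
        by (rule Qtp_formula[OF mg v s si])
      have n0: "negent G i (p s) \<le> 0" by (rule negent_le0[OF fin_i(1) ps])
      have "tau * negent G i (p s) \<le> 0" using tau n0 by (simp add: mult_nonneg_nonpos)
      then show "(\<Sum>a\<in>joint_acts G. joint_prob G ?s' s a * ?F s a) - ?W s \<le> D"
        using E' g Q1 Q2 Wbell[OF s] Dge[OF s] by linarith
    qed
    have "V G i mu ?s' - V G i mu \<sigma> \<le> D / (1 - disc G) + tau * Ab / (1 - disc G)"
      using hi low by (simp add: field_simps)
    also have "\<dots> = (D + tau * Ab) / (1 - disc G)" by (simp add: add_divide_distrib)
    also have "\<dots> \<le> (D + 2 * tau * Ab) / (1 - disc G)"
    proof (rule divide_right_mono)
      have "0 \<le> tau * Ab" using tau Ab0 by simp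
      then show "D + tau * Ab \<le> D + 2 * tau * Ab" by linarith
    qed (use q in simp)
    also have "\<dots> = 1 / (1 - disc G) * (D + 2 * tau * Ab)" by simp
    finally show ?thesis .
  qed
  have ne: "Pol G i \<noteq> {}" using v i unfolding vp_def Pol_def by auto
  have "(SUP p\<in>Pol G i. V G i mu (\<sigma>(i := p))) \<le> V G i mu \<sigma> + 1 / (1 - disc G) * (D + 2 * tau * Ab)"
    using up by (intro cSUP_least[OF ne]) (simp add: algebra_simps)
  then show "(SUP p\<in>Pol G i. V G i mu ((pit t)(i := p))) - V G i mu (pit t)
       \<le> 1 / (1 - disc G) * (Gap G tau (pit t) (ib t) (sb t) + 2 * tau * ln (real (maxA G)))"
    unfolding \<sigma>_def D_def Ab_def by simp
qed

end
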